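(* Fix $x\in\mathbb{C}$. The function $f:[0,\infty)\to\mathbb{R}$ defined by $$f(s):=\log\Big(\frac{1+a+\sqrt{(1+a)^2-b^2}}{2}\Big),\qquad a:=|x|^2+s,\quad b:=2|x|\sqrt{s},$$ (i.e. $f(|y|^2)$ with $a=|x|^2+|y|^2$, $b=2|x||y|$) is strictly increasing on $[0,\infty)$.
   Context: $\log$ is the logarithm in a fixed base. *)

theory Defs
  imports "HOL-Analysis.Analysis"
begin

end

theory Submission
  imports Defs
begin

lemma aux:
  fixes v w k :: real
  assumes "v < w" "k \<ge> 0" "k > 0 \<or> 0 \<le> v"
  shows "v + sqrt (v\<^sup>2 + k) < w + sqrt (w\<^sup>2 + k)"
proof (cases "v\<^sup>2 \<le> w\<^sup>2")
  case True
  then have "sqrt (v\<^sup>2 + k) \<le> sqrt (w\<^sup>2 + k)" by simp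
  then show ?thesis using assms(1) by linarith
next
  case False
  then have v0: "v < 0" using assms(1)
    by (metis linorder_not_less order_less_imp_le power_mono)
  then have k0: "k > 0" using assms(3) by linarith
  define S where "S = sqrt (w\<^sup>2 + k)"
  have S0: "S \<ge> 0" unfolding S_def using assms(2) by (simp add: add_nonneg_nonneg)
  have SS: "S\<^sup>2 = w\<^sup>2 + k" unfolding S_def using assms(2) by (simp add: add_nonneg_nonneg del: real_sqrt_pow2_iff)
  have Sw: "S > - w"
  proof -
    have "sqrt (w\<^sup>2) < S" unfolding S_def using k0 by (intro real_sqrt_less_mono) simp
    then show ?thesis by simp
  qed
  have pos: "0 \<le> w - v + S" using assms(1) S0 by linarith
  have "v\<^sup>2 + k < (w - v + S)\<^sup>2"
  proof -
    have "(w - v) * S > (w - v) * (- w)" using Sw assms(1) using mult_strict_left_mono[of "- w" S "w - v"] by simp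
    then show ?thesis using SS by (simp add: power2_eq_square algebra_simps)
  qed
  then have "sqrt (v\<^sup>2 + k) < w - v + S"
    using pos by (metis real_sqrt_abs real_sqrt_less_mono abs_of_nonneg)
  then show ?thesis unfolding S_def by linarith
qed

theorem lemma2:
  fixes x :: complex and \<beta> :: real
  assumes "\<beta> > 1"
  shows "strict_mono_on {0::real..}
    (\<lambda>s. let a = (cmod x)\<^sup>2 + s; b = 2 * cmod x * sqrt s
         in log \<beta> ((1 + a + sqrt ((1 + a)\<^sup>2 - b\<^sup>2)) / 2))"
proof (rule strict_mono_onI)
  fix s t :: real
  assume s: "s \<in> {0..}" and t: "t \<in> {0..}" and st: "s < t"
  define r where "r = cmod x"
  have r0: "r \<ge> 0" unfolding r_def by simp
  have eq: "\<And>u. u \<ge> 0 \<Longrightarrow> (1 + (r\<^sup>2 + u))\<^sup>2 - (2 * r * sqrt u)\<^sup>2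
      = (1 - r\<^sup>2 + u)\<^sup>2 + 4 * r\<^sup>2"
    by (simp add: power_mult_distrib power2_eq_square algebra_simps)
  define g where "g u = 1 + (r\<^sup>2 + u) + sqrt ((1 - r\<^sup>2 + u)\<^sup>2 + 4 * r\<^sup>2)" for u
  have gpos: "\<And>u. u \<ge> 0 \<Longrightarrow> g u > 0"
    unfolding g_def by (smt (verit) real_sqrt_ge_zero zero_le_power2 r0)
  have "(1 - r\<^sup>2 + s) + sqrt ((1 - r\<^sup>2 + s)\<^sup>2 + 4 * r\<^sup>2)
      < (1 - r\<^sup>2 + t) + sqrt ((1 - r\<^sup>2 + t)\<^sup>2 + 4 * r\<^sup>2)"
  proof (rule aux)
    show "1 - r\<^sup>2 + s < 1 - r\<^sup>2 + t" using st by simp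
    show "0 \<le> 4 * r\<^sup>2" by simp
    show "0 < 4 * r\<^sup>2 \<or> 0 \<le> 1 - r\<^sup>2 + s"
      using s r0 by (cases "r = 0") auto
  qed
  then have gl: "g s < g t" unfolding g_def by linarith
  have "log \<beta> (g s / 2) < log \<beta> (g t / 2)"
    using gl gpos s t assms by simp
  then show "(let a = (cmod x)\<^sup>2 + s; b = 2 * cmod x * sqrt s
         in log \<beta> ((1 + a + sqrt ((1 + a)\<^sup>2 - b\<^sup>2)) / 2)) <
        (let a = (cmod x)\<^sup>2 + t; b = 2 * cmod x * sqrt t
         in log \<beta> ((1 + a + sqrt ((1 + a)\<^sup>2 - b\<^sup>2)) / 2))"
    using eq[of s] eq[of t] s t unfolding g_def Let_def r_def[symmetric] by simp
qed

end
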